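(* Fix $\gamma\in(0,1]$ and $0<\alpha<0.25$, let $\xi>0$ be arbitrarily small, and set $\tilde k=(\alpha+\xi)\log_2N$. Then for all sufficiently large $N$ and every integer $k$ with $\tilde k\le k\le b$, $$\lambda(s^*_k+1)\le\lambda(\lambda^{2^k-1}+1)\le\sqrt\lambda.$$
   Context: Let $N\ge1$, $\lambda=1-\gamma/N^\alpha$, and $b=b(N)\ge1$ an integer with $b=O(\log N)$. The mean-field vector field is $f_k(s)=\lambda(s_{k-1}^2-s_k^2)-(s_k-s_{k+1})$, $k=1,\dots,b$, with $s_0=1,s_{b+1}=0$, and $s^*$ is its unique equilibrium in $\{s\in\mathbb R^b:1\ge s_1\ge\cdots\ge s_b\ge0\}$, i.e. $s^*_0=1$, $\lambda((s^*_{k-1})^2-(s^*_k)^2)-(s^*_k-s^*_{k+1})=0$ for $1\le k\le b-1$ and $\lambda((s^*_{b-1})^2-(s^*_b)^2)-s^*_b=0$. *)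

theory Defs
  imports "HOL-Analysis.Analysis" "HOL-Library.Landau_Symbols"
begin

definition lam :: "real \<Rightarrow> real \<Rightarrow> nat \<Rightarrow> real" where
  "lam \<gamma> \<alpha> N = 1 - \<gamma> / (real N powr \<alpha>)"

text \<open>Equilibrium of the mean-field vector field on coordinates 1..b, represented as a
  function nat => real with s 0 = 1 and s k = 0 for k > b (so s (b+1) = 0), lying in
  the region 1 >= s 1 >= ... >= s b >= 0, with f_k(s) = 0 for 1 <= k <= b.\<close>
definition is_equilibrium :: "real \<Rightarrow> nat \<Rightarrow> (nat \<Rightarrow> real) \<Rightarrow> bool" where
  "is_equilibrium l b s \<longleftrightarrow>
     s 0 = 1 \<and> (\<forall>k>b. s k = 0) \<and>
     (\<forall>k\<in>{1..b}. s k \<le> s (k - 1)) \<and> s b \<ge> 0 \<and>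
     (\<forall>k\<in>{1..b}. l * ((s (k - 1))\<^sup>2 - (s k)\<^sup>2) - (s k - s (k + 1)) = 0)"

definition sstar :: "real \<Rightarrow> nat \<Rightarrow> nat \<Rightarrow> real" where
  "sstar l b = (THE s. is_equilibrium l b s)"

end

theory Submission
  imports Defs "HOL-Real_Asymp.Real_Asymp"
begin

fun xs :: "real \<Rightarrow> real \<Rightarrow> nat \<Rightarrow> real" where
  "xs l t 0 = 1"
| "xs l t (Suc k) = l * ((xs l t k)\<^sup>2 - t\<^sup>2)"

fun hm :: "real \<Rightarrow> real \<Rightarrow> nat \<Rightarrow> real" where
  "hm l t 0 = 1 - t"
| "hm l t (Suc k) = min (hm l t k) (xs l t (Suc k) - t)"

lemma xs_cont: "continuous_on A (\<lambda>t. xs l t k)"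
  by (induction k) (auto intro!: continuous_intros)

lemma hm_cont: "continuous_on A (\<lambda>t. hm l t k)"
  by (induction k) (auto intro!: continuous_intros xs_cont)

lemma hm_le: "j \<le> k \<Longrightarrow> hm l t k \<le> xs l t j - t"
proof (induction k)
  case 0 then show ?case by simp
next
  case (Suc k) then show ?case by (cases "j = Suc k") auto
qed

lemma hm_attain: "\<exists>j\<le>k. hm l t k = xs l t j - t"
proof (induction k)
  case 0 then show ?case by simp
next
  case (Suc k)
  then obtain j where "j \<le> k" "hm l t k = xs l t j - t" by blast
  then show ?case by (cases "hm l t k \<le> xs l t (Suc k) - t") (auto simp: min_def intro: le_SucI)
qed

lemma xs_zero_pos: "0 < l \<Longrightarrow> 0 < xs l 0 k"
  by (induction k) auto

lemma xs_le_one: assumes "0 < l" "l \<le> 1" "\<forall>j\<le>b. 0 \<le> xs l t j" shows "k \<le> b \<Longrightarrow> xs l t k \<le> 1"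
proof (induction k)
  case 0 then show ?case by simp
next
  case (Suc k)
  have x0: "0 \<le> xs l t k" "xs l t k \<le> 1" using Suc assms by auto
  have "xs l t (Suc k) \<le> l * (xs l t k)\<^sup>2" using assms by (simp add: mult_left_mono)
  also have "\<dots> \<le> 1 * 1" using x0 assms by (intro mult_mono) (auto simp: power_le_one)
  finally show ?case by simp
qed

lemma exists_eq:
  assumes l: "0 < l" "l \<le> 1" and b: "1 \<le> b"
  shows "\<exists>s. is_equilibrium l b s"
proof -
  have h0: "0 < hm l 0 b" using hm_attain[of b l 0] xs_zero_pos[OF l(1)] by force
  have "hm l 1 b \<le> xs l 1 1 - 1" using hm_le[OF b] by blast
  hence h1: "hm l 1 b < 0" by simp
  obtain t where t: "0 \<le> t" "t \<le> 1" "hm l t b = 0"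
    using IVT2'[of "\<lambda>t. hm l t b" 1 0 0] h0 h1 hm_cont by force
  have t0: "t \<noteq> 0" using h0 t by auto
  have t1: "t \<noteq> 1" using h1 t by auto
  have ge: "\<forall>j\<le>b. t \<le> xs l t j" using hm_le[of _ b l t] t by force
  obtain j where j: "j \<le> b" "xs l t j = t" using hm_attain[of b l t] t by force
  have jb: "j = b"
  proof (rule ccontr)
    assume "j \<noteq> b"
    hence "Suc j \<le> b" using j by auto
    hence "t \<le> xs l t (Suc j)" using ge by blast
    also have "xs l t (Suc j) = 0" using j by simp
    finally show False using t t0 by auto
  qed
  have nn: "\<forall>j\<le>b. 0 \<le> xs l t j" using ge t by force
  have le1: "\<And>k. k \<le> b \<Longrightarrow> xs l t k \<le> 1" using xs_le_one[OF l nn] .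
  define s where "s k = (if k \<le> b then xs l t k else 0)" for k
  have "is_equilibrium l b s"
    unfolding is_equilibrium_def
  proof (intro conjI ballI allI impI)
    show "s 0 = 1" by (simp add: s_def)
    show "\<And>k. b < k \<Longrightarrow> s k = 0" by (simp add: s_def)
    show "0 \<le> s b" using nn by (simp add: s_def)
  next
    fix k assume k: "k \<in> {1..b}"
    then obtain m where m: "k = Suc m" "m < b" by (cases k) auto
    have x0: "0 \<le> xs l t m" "xs l t m \<le> 1" using nn le1 m by auto
    have "xs l t k \<le> l * (xs l t m)\<^sup>2" using m l by (simp add: mult_left_mono)
    also have "\<dots> \<le> 1 * xs l t m" using x0 l
      by (intro mult_mono) (auto simp: power2_eq_square mult_left_le_one_le)
    finally show "s k \<le> s (k - 1)" using m by (simp add: s_def)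
  next
    fix k assume k: "k \<in> {1..b}"
    then obtain m where m: "k = Suc m" "m < b" by (cases k) auto
    show "l * ((s (k - 1))\<^sup>2 - (s k)\<^sup>2) - (s k - s (k + 1)) = 0"
    proof (cases "k = b")
      case True
      have x: "l * ((xs l t m)\<^sup>2 - t\<^sup>2) = t" using j jb m True by simp
      have "s (k - 1) = xs l t m" "s k = t" "s (k + 1) = 0"
        using m True j jb by (auto simp: s_def)
      then show ?thesis using x by simp
    next
      case False
      then show ?thesis using m k by (simp add: s_def algebra_simps)
    qed
  qed
  then show ?thesis by blast
qed

lemma eq_props:
  assumes l: "0 < l" and e: "is_equilibrium l b s" and b: "1 \<le> b"
  shows "\<forall>k\<le>b. s k = xs l (s b) k" "\<forall>k\<le>b. s b \<le> s k"
proof -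
  have s0: "s 0 = 1" and sb: "\<forall>k>b. s k = 0" and mono: "\<forall>k\<in>{1..b}. s k \<le> s (k - 1)"
    and eqn: "\<forall>k\<in>{1..b}. l * ((s (k - 1))\<^sup>2 - (s k)\<^sup>2) - (s k - s (k + 1)) = 0"
    using e unfolding is_equilibrium_def by auto
  have rec: "m < b \<Longrightarrow> s (b - m) = l * ((s (b - m - 1))\<^sup>2 - (s b)\<^sup>2)" for m
  proof (induction m)
    case 0
    have "l * ((s (b - 1))\<^sup>2 - (s b)\<^sup>2) - (s b - s (b + 1)) = 0" using eqn b by auto
    then show ?case using sb by simp
  next
    case (Suc m)
    define k where "k = b - Suc m"
    have k: "k \<in> {1..b}" "b - m = Suc k" "b - m - 1 = k" using Suc.prems by (auto simp: k_def)
    have "l * ((s (k - 1))\<^sup>2 - (s k)\<^sup>2) - (s k - s (k + 1)) = 0" using eqn k by blast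
    moreover have "s (Suc k) = l * ((s k)\<^sup>2 - (s b)\<^sup>2)" using Suc k by simp
    ultimately show ?case using k by (simp add: k_def[symmetric] algebra_simps)
  qed
  have monob: "m \<le> b \<Longrightarrow> s b \<le> s (b - m)" for m
  proof (induction m)
    case 0 then show ?case by simp
  next
    case (Suc m)
    have "b - m \<in> {1..b}" "b - m - 1 = b - Suc m" using Suc.prems by auto
    then show ?case using mono Suc by force
  qed
  show "\<forall>k\<le>b. s b \<le> s k"
  proof (intro allI impI)
    fix k assume "k \<le> b" then show "s b \<le> s k" using monob[of "b - k"] by simp
  qed
  show "\<forall>k\<le>b. s k = xs l (s b) k"
  proof (intro allI impI)
    fix k assume "k \<le> b" then show "s k = xs l (s b) k"
    proof (induction k)
      case 0 then show ?case using s0 by simp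
    next
      case (Suc k)
      have "s (Suc k) = l * ((s k)\<^sup>2 - (s b)\<^sup>2)" using rec[of "b - Suc k"] Suc.prems
        by (simp add: Suc_diff_Suc)
      then show ?case using Suc by simp
    qed
  qed
qed

lemma xs_compare:
  assumes l: "0 < l" and t: "0 \<le> t" "t < t'"
  shows "(\<forall>j<k. 0 \<le> xs l t' j) \<Longrightarrow> xs l t' k \<le> xs l t k \<and> (0 < k \<longrightarrow> xs l t' k < xs l t k)"
proof (induction k)
  case 0 then show ?case by simp
next
  case (Suc k)
  have a: "xs l t' k \<le> xs l t k" "0 \<le> xs l t' k" using Suc by auto
  have "(xs l t' k)\<^sup>2 \<le> (xs l t k)\<^sup>2" using a by (intro power_mono) auto
  moreover have "t\<^sup>2 < t'\<^sup>2" using t by (intro power_strict_mono) auto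
  ultimately have "(xs l t' k)\<^sup>2 - t'\<^sup>2 < (xs l t k)\<^sup>2 - t\<^sup>2" by linarith
  then show ?case using l by simp
qed

lemma unique_eq:
  assumes l: "0 < l" "l \<le> 1" and b: "1 \<le> b"
  shows "\<exists>!s. is_equilibrium l b s"
proof -
  have key: "\<not> s b < s' b" if e: "is_equilibrium l b s" "is_equilibrium l b s'" for s s'
  proof
    assume lt: "s b < s' b"
    have p1: "\<forall>k\<le>b. s k = xs l (s b) k" and p2: "\<forall>k\<le>b. s' k = xs l (s' b) k"
      "\<forall>k\<le>b. s' b \<le> s' k" using eq_props[OF l(1) _ b] e by blast+
    have sb0: "0 \<le> s b" using e unfolding is_equilibrium_def by auto
    have "\<forall>j<b. 0 \<le> xs l (s' b) j"
    proof (intro allI impI)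
      fix j assume "j < b"
      then have "s' j = xs l (s' b) j" "s' b \<le> s' j" using p2 less_imp_le by blast+
      then show "0 \<le> xs l (s' b) j" using sb0 lt by linarith
    qed
    hence "xs l (s' b) b < xs l (s b) b" using xs_compare[OF l(1) sb0 lt, of b] b by auto
    moreover have "s b = xs l (s b) b" "s' b = xs l (s' b) b" using p1 p2 by blast+
    ultimately show False using lt by linarith
  qed
  obtain s where s: "is_equilibrium l b s" using exists_eq[OF l b] by blast
  moreover have "s' = s" if s': "is_equilibrium l b s'" for s'
  proof
    fix k
    have "s b = s' b" using key[OF s s'] key[OF s' s] by linarith
    moreover have "\<forall>k\<le>b. s k = xs l (s b) k" "\<forall>k\<le>b. s' k = xs l (s' b) k"
      using eq_props(1)[OF l(1) s b] eq_props(1)[OF l(1) s' b] by blast+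
    moreover have "\<forall>k>b. s k = 0" "\<forall>k>b. s' k = 0" using s s' unfolding is_equilibrium_def by auto
    ultimately show "s' k = s k" by (metis not_le)
  qed
  ultimately show ?thesis by blast
qed

lemma nat_aux: "1 \<le> (m::nat) \<Longrightarrow> 1 + (m - 1) * 2 = 2 * m - 1"
  by (cases m) auto

lemma xs_bound:
  assumes l: "0 < l" and t: "0 \<le> t"
  shows "(\<forall>j<k. 0 \<le> xs l t j) \<Longrightarrow> xs l t k \<le> l ^ (2 ^ k - 1)"
proof (induction k)
  case 0 then show ?case by simp
next
  case (Suc k)
  have a: "xs l t k \<le> l ^ (2 ^ k - 1)" "0 \<le> xs l t k" using Suc by auto
  have "xs l t (Suc k) \<le> l * (xs l t k)\<^sup>2" using l t by (simp add: mult_left_mono)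
  also have "\<dots> \<le> l * (l ^ (2 ^ k - 1))\<^sup>2" using a l by (intro mult_left_mono power_mono) auto
  also have "\<dots> = l ^ (1 + (2 ^ k - 1) * 2)" by (simp add: power_mult power_add)
  also have "1 + (2 ^ k - 1) * 2 = (2::nat) ^ Suc k - 1"
    using nat_aux[of "2 ^ k"] by simp
  finally show ?case .
qed

lemma sstar_bound:
  assumes l: "0 < l" "l \<le> 1" and b: "1 \<le> b" and k: "k \<le> b"
  shows "sstar l b k \<le> l ^ (2 ^ k - 1)"
proof -
  have e: "is_equilibrium l b (sstar l b)"
    unfolding sstar_def using unique_eq[OF l b] by (rule theI')
  have p: "\<forall>k\<le>b. sstar l b k = xs l (sstar l b b) k" "\<forall>k\<le>b. sstar l b b \<le> sstar l b k"
    using eq_props[OF l(1) e b] by blast+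
  have sb0: "0 \<le> sstar l b b" using e unfolding is_equilibrium_def by auto
  have "\<forall>j<k. 0 \<le> xs l (sstar l b b) j"
  proof (intro allI impI)
    fix j assume "j < k"
    then have "sstar l b j = xs l (sstar l b b) j" "sstar l b b \<le> sstar l b j" using p k by (meson less_imp_le order.trans)+
    then show "0 \<le> xs l (sstar l b b) j" using sb0 by linarith
  qed
  moreover have "sstar l b k = xs l (sstar l b b) k" using p k by blast
  ultimately show ?thesis using xs_bound[OF l(1) sb0, of k] by simp
qed


lemma asy1: assumes "0 < g" "0 < a" "0 < x"
  shows "\<forall>\<^sub>F N in sequentially. exp (- g * real N powr x) \<le> g / real N powr a / 4"
  using assms by real_asymp

lemma asy2: assumes "0 < g" "0 < a"
  shows "\<forall>\<^sub>F N in sequentially. g / real N powr a \<le> 1/2"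
  using assms by real_asymp

theorem lemma16:
  fixes \<gamma> \<alpha> \<xi> :: real and b :: "nat \<Rightarrow> nat"
  assumes "0 < \<gamma>" "\<gamma> \<le> 1" "0 < \<alpha>" "\<alpha> < 0.25" "0 < \<xi>"
    and "\<forall>N. 1 \<le> b N"
    and "(\<lambda>N. real (b N)) \<in> O(\<lambda>N. ln (real N))"
  shows "\<forall>\<^sub>F N in sequentially. \<forall>k::nat.
           (\<alpha> + \<xi>) * log 2 (real N) \<le> real k \<and> k \<le> b N \<longrightarrow>
             lam \<gamma> \<alpha> N * (sstar (lam \<gamma> \<alpha> N) (b N) k + 1)
               \<le> lam \<gamma> \<alpha> N * (lam \<gamma> \<alpha> N ^ (2 ^ k - 1) + 1) \<and>
             lam \<gamma> \<alpha> N * (lam \<gamma> \<alpha> N ^ (2 ^ k - 1) + 1) \<le> sqrt (lam \<gamma> \<alpha> N)"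
proof -
  have ev1: "\<forall>\<^sub>F N in sequentially. (1::nat) \<le> N" by (rule eventually_ge_at_top)
  note ev2 = asy2[OF assms(1) assms(3)]
  note ev3 = asy1[OF assms(1) assms(3) assms(5)]
  show ?thesis using ev1 ev2 ev3
  proof eventually_elim
    case (elim N)
    define e where "e = \<gamma> / real N powr \<alpha>"
    define l where "l = lam \<gamma> \<alpha> N"
    have Npos: "0 < real N" using elim by simp
    have le: "l = 1 - e" by (simp add: l_def e_def lam_def)
    have e0: "0 < e" using Npos assms(1) by (simp add: e_def)
    have eh: "e \<le> 1/2" using elim by (simp add: e_def)
    have l0: "0 < l" "l \<le> 1" "1/2 \<le> l" using le e0 eh by auto
    have e3: "exp (- \<gamma> * real N powr \<xi>) \<le> e / 4" using elim by (simp add: e_def)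
    show ?case unfolding l_def[symmetric]
    proof (intro allI impI conjI)
      fix k :: nat
      assume k: "(\<alpha> + \<xi>) * log 2 (real N) \<le> real k \<and> k \<le> b N"
      have "sstar l (b N) k \<le> l ^ (2 ^ k - 1)"
        using sstar_bound[OF l0(1,2)] assms(6) k by blast
      then show "l * (sstar l (b N) k + 1) \<le> l * (l ^ (2 ^ k - 1) + 1)"
        using l0 by (intro mult_left_mono) auto
      have "real N powr (\<alpha> + \<xi>) = (2 powr (log 2 (real N))) powr (\<alpha> + \<xi>)"
        using Npos by simp
      also have "\<dots> = 2 powr ((\<alpha> + \<xi>) * log 2 (real N))"
        by (simp add: powr_powr mult.commute)
      also have "\<dots> \<le> 2 powr (real k)" using k by (intro powr_mono) auto
      also have "\<dots> = 2 ^ k" by (simp add: powr_realpow)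
      finally have pk: "real N powr (\<alpha> + \<xi>) \<le> 2 ^ k" .
      have "\<gamma> * real N powr \<xi> = e * real N powr (\<alpha> + \<xi>)"
        using Npos by (simp add: e_def powr_add)
      also have "\<dots> \<le> e * 2 ^ k" using pk e0 by (intro mult_left_mono) auto
      finally have ek: "\<gamma> * real N powr \<xi> \<le> e * 2 ^ k" .
      have "l ^ (2 ^ k) \<le> exp (- e) ^ (2 ^ k)"
        using l0 le by (intro power_mono) (auto simp: exp_ge_add_one_self[of "-e", simplified])
      also have "\<dots> = exp (- e * 2 ^ k)" by (simp add: exp_of_nat_mult[symmetric] mult.commute)
      also have "\<dots> \<le> exp (- \<gamma> * real N powr \<xi>)" using ek by simp
      also have "\<dots> \<le> e / 4" by (rule e3)
      finally have lk: "l ^ (2 ^ k) \<le> e / 4" .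
      have llk: "l * l ^ (2 ^ k - 1) = l ^ (2 ^ k)"
        by (simp add: power_Suc[symmetric] del: power_Suc)
      define r where "r = sqrt l"
      have r: "r * r = l" "0 \<le> r" using l0 by (auto simp: r_def)
      have r1: "r \<le> 1" using l0 r_def by simp
      have rh: "1/2 \<le> r"
      proof -
        have "r * r \<le> r * 1" using r r1 by (intro mult_left_mono) auto
        then show ?thesis using r l0 by simp
      qed
      have re: "r \<le> 1 - e/2"
      proof (rule ccontr)
        assume "\<not> r \<le> 1 - e/2"
        hence "1 - e/2 < r" by simp
        moreover have "0 \<le> 1 - e/2" using eh by simp
        ultimately have "(1 - e/2) * (1 - e/2) < r * r" by (intro mult_strict_mono') auto
        then show False using r le by (simp add: algebra_simps power2_eq_square)
      qed
      have "e / 4 \<le> r * (1 - r)"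
      proof -
        have "(1/2) * (e/2) \<le> r * (1 - r)" using rh re e0 by (intro mult_mono) auto
        then show ?thesis by simp
      qed
      hence "l ^ (2 ^ k) + l \<le> r" using lk r by (simp add: algebra_simps)
      then show "l * (l ^ (2 ^ k - 1) + 1) \<le> sqrt l"
        using llk by (simp add: algebra_simps r_def)
    qed
  qed
qed

end
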